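(* With probability at least $1-\delta$, for every $k\in[K]$ and every policy $\pi\in\Pi^k$, $V_1^\pi(\mu;c,P)\le\tau$.
   Context: Episodic constrained MDP. $\mathcal S,\mathcal A$ finite, $H\ge1$ integer. For each $h\in[H]$, $(s,a)$: unknown transition distribution $P_h(\cdot\mid s,a)$, unknown mean reward $r_h(s,a)\in[0,1]$, unknown mean cost $c_h(s,a)\in[0,1]$. Known initial distribution $\mu$, threshold $\tau\in(0,H]$. Policies $\pi=(\pi_h)$ are randomized Markov. $V_h^\pi(s;g,P'):=\mathbb E_{P',\pi}[\sum_{t=h}^Hg_t(S_t,A_t)\mid S_h=s]$, $V_1^\pi(\mu;g,P'):=\mathbb E_{S_1\sim\mu}V_1^\pi(S_1;g,P')$. A policy $\pi^0$ is known with $V_1^{\pi^0}(\mu;c,P)=c^0<\tau$, $c^0$ known. Interaction over $K$ episodes: in episode $k$, $\pi^k$ depends only on previous data; $S_1^k\sim\mu$, $A_h^k\sim\pi_h^k(\cdot\mid S_h^k)$, observed $R_h^k=r_h(S_h^k,A_h^k)+\text{noise}$, $C_h^k=c_h(S_h^k,A_h^k)+\text{noise}$, $S_{h+1}^k\sim P_h(\cdot\mid S_h^k,A_h^k)$; $\mathcal F_k$ is generated by all observations of episodes $1..k$; noises are conditionally independent, zero mean and satisfy $\mathbb E[e^{\lambda\xi}\mid\mathcal F_{k-1}]\le e^{\lambda^2/4}$ for all real $\lambda$. Estimates: $N_h^k(s,a)$ = visits of $(s,a)$ at step $h$ in episodes $1..k-1$; $\hat P^k_h$, $\hat r_h^k$,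 $\hat c_h^k$ the empirical transition frequencies and empirical means of observed rewards/costs (denominator $N_h^k(s,a)\vee1$); $Z:=\log(16|\mathcal S|^2|\mathcal A|HK/\delta)$, $\beta_h^k(s,a):=\sqrt{Z/(N_h^k(s,a)\vee1)}$, $\delta\in(0,1)$. OptPess-LP: $\alpha_r:=1+|\mathcal S|H+\frac{4H(1+|\mathcal S|H)}{\tau-c^0}$, $\bar r_h^k:=\hat r_h^k+\alpha_r\beta_h^k$, $\underline c_h^k:=\hat c_h^k+(1+H|\mathcal S|)\beta_h^k$; $\Pi^k:=\{\pi^0\}$ if $V_1^{\pi^0}(\mu;\underline c^k,\hat P^k)\ge(\tau+c^0)/2$, otherwise $\Pi^k:=\{\pi:V_1^\pi(\mu;\underline c^k,\hat P^k)\le\tau\}$; the algorithm executes $\pi^k\in\arg\max_{\pi\in\Pi^k}V_1^\pi(\mu;\bar r^k,\hat P^k)$ in episode $k$. *)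

theory Defs
  imports "HOL-Probability.Probability"
begin

text \<open>Conventions. Steps h range over 1..H, episodes k over 1..K.
 A transition kernel is P h s a s' = P_h(s'|s,a); a reward/cost function is g h s a;
 a randomized Markov policy is q h s a = pi_h(a|s).\<close>

definition is_dist :: "('x::finite \<Rightarrow> real) \<Rightarrow> bool" where
  "is_dist p \<longleftrightarrow> (\<forall>x. 0 \<le> p x) \<and> (\<Sum>x\<in>UNIV. p x) = 1"

definition is_policy :: "nat \<Rightarrow> (nat \<Rightarrow> 's::finite \<Rightarrow> 'a::finite \<Rightarrow> real) \<Rightarrow> bool" where
  "is_policy H q \<longleftrightarrow> (\<forall>h\<in>{1..H}. \<forall>s. is_dist (q h s))"

text \<open>Vr n h q g P s: expected sum of g over the n steps h, h+1, ..., h+n-1 under q and P,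
 starting in s at step h (Bellman recursion; P need not be stochastic, e.g. for empirical
 estimates of unvisited pairs).\<close>
fun Vr :: "nat \<Rightarrow> nat \<Rightarrow> (nat \<Rightarrow> 's::finite \<Rightarrow> 'a::finite \<Rightarrow> real) \<Rightarrow> (nat \<Rightarrow> 's \<Rightarrow> 'a \<Rightarrow> real)
            \<Rightarrow> (nat \<Rightarrow> 's \<Rightarrow> 'a \<Rightarrow> 's \<Rightarrow> real) \<Rightarrow> 's \<Rightarrow> real" where
  "Vr 0 h q g P s = 0"
| "Vr (Suc n) h q g P s =
     (\<Sum>a\<in>UNIV. q h s a * (g h s a + (\<Sum>s'\<in>UNIV. P h s a s' * Vr n (Suc h) q g P s')))"

definition Vh :: "nat \<Rightarrow> nat \<Rightarrow> (nat \<Rightarrow> 's::finite \<Rightarrow> 'a::finite \<Rightarrow> real) \<Rightarrow> 's \<Rightarrow>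
                  (nat \<Rightarrow> 's \<Rightarrow> 'a \<Rightarrow> real) \<Rightarrow> (nat \<Rightarrow> 's \<Rightarrow> 'a \<Rightarrow> 's \<Rightarrow> real) \<Rightarrow> real" where
  "Vh H h q s g P = Vr (H + 1 - h) h q g P s"

definition V1 :: "nat \<Rightarrow> (nat \<Rightarrow> 's::finite \<Rightarrow> 'a::finite \<Rightarrow> real) \<Rightarrow> ('s \<Rightarrow> real) \<Rightarrow>
                  (nat \<Rightarrow> 's \<Rightarrow> 'a \<Rightarrow> real) \<Rightarrow> (nat \<Rightarrow> 's \<Rightarrow> 'a \<Rightarrow> 's \<Rightarrow> real) \<Rightarrow> real" where
  "V1 H q mu g P = (\<Sum>s\<in>UNIV. mu s * Vh H 1 q s g P)"

text \<open>The observed data: S k h (h = 1..H+1), A k h, R k h, C k h (h = 1..H), episode k.\<close>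

definition gen_ev :: "'w measure \<Rightarrow> 'b measure \<Rightarrow> ('w \<Rightarrow> 'b) \<Rightarrow> 'w set set" where
  "gen_ev M N X = {X -` B \<inter> space M | B. B \<in> sets N}"

definition ep_events :: "'w measure \<Rightarrow> nat \<Rightarrow> (nat \<Rightarrow> nat \<Rightarrow> 'w \<Rightarrow> 's) \<Rightarrow> (nat \<Rightarrow> nat \<Rightarrow> 'w \<Rightarrow> 'a)
     \<Rightarrow> (nat \<Rightarrow> nat \<Rightarrow> 'w \<Rightarrow> real) \<Rightarrow> (nat \<Rightarrow> nat \<Rightarrow> 'w \<Rightarrow> real) \<Rightarrow> nat \<Rightarrow> 'w set set" where
  "ep_events M H S A R C j =
     (\<Union>h\<in>{1..H+1}. gen_ev M (count_space UNIV) (S j h))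
   \<union> (\<Union>h\<in>{1..H}. gen_ev M (count_space UNIV) (A j h) \<union> gen_ev M borel (R j h) \<union> gen_ev M borel (C j h))"

definition Falg :: "'w measure \<Rightarrow> nat \<Rightarrow> (nat \<Rightarrow> nat \<Rightarrow> 'w \<Rightarrow> 's) \<Rightarrow> (nat \<Rightarrow> nat \<Rightarrow> 'w \<Rightarrow> 'a)
     \<Rightarrow> (nat \<Rightarrow> nat \<Rightarrow> 'w \<Rightarrow> real) \<Rightarrow> (nat \<Rightarrow> nat \<Rightarrow> 'w \<Rightarrow> real) \<Rightarrow> nat \<Rightarrow> 'w measure" where
  "Falg M H S A R C k = sigma (space M) (\<Union>j\<in>{1..k}. ep_events M H S A R C j)"

text \<open>Within-episode history sigma-algebra of episode k at step h:
  F_(k-1) together with S k 1..h and A,R,C k 1..h-1, and additionally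
  st = 0: nothing; st = 1: A k h; st = 2: A k h, R k h; st = 3: A k h, R k h, C k h.
  The data of an episode is revealed in the order S_1, A_1, R_1, C_1, S_2, ..., S_(H+1).\<close>
definition Galg :: "'w measure \<Rightarrow> nat \<Rightarrow> (nat \<Rightarrow> nat \<Rightarrow> 'w \<Rightarrow> 's) \<Rightarrow> (nat \<Rightarrow> nat \<Rightarrow> 'w \<Rightarrow> 'a)
     \<Rightarrow> (nat \<Rightarrow> nat \<Rightarrow> 'w \<Rightarrow> real) \<Rightarrow> (nat \<Rightarrow> nat \<Rightarrow> 'w \<Rightarrow> real) \<Rightarrow> nat \<Rightarrow> nat \<Rightarrow> nat \<Rightarrow> 'w measure" where
  "Galg M H S A R C k h st = sigma (space M)
     ((\<Union>j\<in>{1..<k}. ep_events M H S A R C j)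
    \<union> (\<Union>i\<in>{1..h}. gen_ev M (count_space UNIV) (S k i))
    \<union> (\<Union>i\<in>{1..<h}. gen_ev M (count_space UNIV) (A k i) \<union> gen_ev M borel (R k i) \<union> gen_ev M borel (C k i))
    \<union> (if 1 \<le> st then gen_ev M (count_space UNIV) (A k h) else {})
    \<union> (if 2 \<le> st then gen_ev M borel (R k h) else {})
    \<union> (if 3 \<le> st then gen_ev M borel (C k h) else {}))"

definition Ncnt :: "(nat \<Rightarrow> nat \<Rightarrow> 'w \<Rightarrow> 's) \<Rightarrow> (nat \<Rightarrow> nat \<Rightarrow> 'w \<Rightarrow> 'a) \<Rightarrow> nat \<Rightarrow> nat \<Rightarrow> 's \<Rightarrow> 'a \<Rightarrow> 'w \<Rightarrow> nat" where
  "Ncnt S A k h s a w = card {j\<in>{1..<k}. S j h w = s \<and> A j h w = a}"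

definition Phat :: "(nat \<Rightarrow> nat \<Rightarrow> 'w \<Rightarrow> 's) \<Rightarrow> (nat \<Rightarrow> nat \<Rightarrow> 'w \<Rightarrow> 'a) \<Rightarrow> nat \<Rightarrow> 'w \<Rightarrow> nat \<Rightarrow> 's \<Rightarrow> 'a \<Rightarrow> 's \<Rightarrow> real" where
  "Phat S A k w h s a s' =
     real (card {j\<in>{1..<k}. S j h w = s \<and> A j h w = a \<and> S j (Suc h) w = s'})
       / real (max (Ncnt S A k h s a w) 1)"

definition emp_mean :: "(nat \<Rightarrow> nat \<Rightarrow> 'w \<Rightarrow> 's) \<Rightarrow> (nat \<Rightarrow> nat \<Rightarrow> 'w \<Rightarrow> 'a) \<Rightarrow> (nat \<Rightarrow> nat \<Rightarrow> 'w \<Rightarrow> real)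
      \<Rightarrow> nat \<Rightarrow> 'w \<Rightarrow> nat \<Rightarrow> 's \<Rightarrow> 'a \<Rightarrow> real" where
  "emp_mean S A X k w h s a =
     (\<Sum>j\<in>{j\<in>{1..<k}. S j h w = s \<and> A j h w = a}. X j h w) / real (max (Ncnt S A k h s a w) 1)"

definition Zconf :: "'s::finite itself \<Rightarrow> 'a::finite itself \<Rightarrow> nat \<Rightarrow> nat \<Rightarrow> real \<Rightarrow> real" where
  "Zconf _ _ H K \<delta> = ln (16 * real (CARD('s))^2 * real (CARD('a)) * real H * real K / \<delta>)"

definition beta :: "nat \<Rightarrow> nat \<Rightarrow> real \<Rightarrow> (nat \<Rightarrow> nat \<Rightarrow> 'w \<Rightarrow> 's::finite) \<Rightarrow> (nat \<Rightarrow> nat \<Rightarrow> 'w \<Rightarrow> 'a::finite)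
      \<Rightarrow> nat \<Rightarrow> 'w \<Rightarrow> nat \<Rightarrow> 's \<Rightarrow> 'a \<Rightarrow> real" where
  "beta H K \<delta> S A k w h s a =
     sqrt (Zconf TYPE('s) TYPE('a) H K \<delta> / real (max (Ncnt S A k h s a w) 1))"

definition alpha_r :: "'s::finite itself \<Rightarrow> nat \<Rightarrow> real \<Rightarrow> real \<Rightarrow> real" where
  "alpha_r _ H \<tau> c0 = 1 + real (CARD('s)) * real H
      + 4 * real H * (1 + real (CARD('s)) * real H) / (\<tau> - c0)"

definition rbar :: "nat \<Rightarrow> nat \<Rightarrow> real \<Rightarrow> real \<Rightarrow> real \<Rightarrow> (nat \<Rightarrow> nat \<Rightarrow> 'w \<Rightarrow> 's::finite) \<Rightarrow> (nat \<Rightarrow> nat \<Rightarrow> 'w \<Rightarrow> 'a::finite)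
      \<Rightarrow> (nat \<Rightarrow> nat \<Rightarrow> 'w \<Rightarrow> real) \<Rightarrow> nat \<Rightarrow> 'w \<Rightarrow> nat \<Rightarrow> 's \<Rightarrow> 'a \<Rightarrow> real" where
  "rbar H K \<delta> \<tau> c0 S A R k w h s a =
     emp_mean S A R k w h s a + alpha_r TYPE('s) H \<tau> c0 * beta H K \<delta> S A k w h s a"

definition cpess :: "nat \<Rightarrow> nat \<Rightarrow> real \<Rightarrow> (nat \<Rightarrow> nat \<Rightarrow> 'w \<Rightarrow> 's::finite) \<Rightarrow> (nat \<Rightarrow> nat \<Rightarrow> 'w \<Rightarrow> 'a::finite)
      \<Rightarrow> (nat \<Rightarrow> nat \<Rightarrow> 'w \<Rightarrow> real) \<Rightarrow> nat \<Rightarrow> 'w \<Rightarrow> nat \<Rightarrow> 's \<Rightarrow> 'a \<Rightarrow> real" where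
  "cpess H K \<delta> S A C k w h s a =
     emp_mean S A C k w h s a + (1 + real H * real (CARD('s))) * beta H K \<delta> S A k w h s a"

definition PiSet :: "nat \<Rightarrow> nat \<Rightarrow> real \<Rightarrow> real \<Rightarrow> real \<Rightarrow> ('s::finite \<Rightarrow> real)
      \<Rightarrow> (nat \<Rightarrow> 's \<Rightarrow> 'a::finite \<Rightarrow> real) \<Rightarrow> (nat \<Rightarrow> nat \<Rightarrow> 'w \<Rightarrow> 's) \<Rightarrow> (nat \<Rightarrow> nat \<Rightarrow> 'w \<Rightarrow> 'a)
      \<Rightarrow> (nat \<Rightarrow> nat \<Rightarrow> 'w \<Rightarrow> real) \<Rightarrow> nat \<Rightarrow> 'w \<Rightarrow> (nat \<Rightarrow> 's \<Rightarrow> 'a \<Rightarrow> real) set" where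
  "PiSet H K \<delta> \<tau> c0 \<mu> pi0 S A C k w =
     (if (\<tau> + c0) / 2 \<le> V1 H pi0 \<mu> (cpess H K \<delta> S A C k w) (Phat S A k w) then {pi0}
      else {q. is_policy H q \<and> V1 H q \<mu> (cpess H K \<delta> S A C k w) (Phat S A k w) \<le> \<tau>})"

end

theory Submission
  imports Defs
begin

lemma sigma_gen_measurable:
  assumes "Gen \<subseteq> Pow (space M)" "gen_ev M N X \<subseteq> Gen" "\<And>w. w \<in> space M \<Longrightarrow> X w \<in> space N"
  shows "X \<in> measurable (sigma (space M) Gen) N"
proof (rule measurableI)
  fix w assume "w \<in> space (sigma (space M) Gen)"
  then show "X w \<in> space N" using assms(1,3) by (simp add: space_measure_of_conv)
next
  fix B assume "B \<in> sets N"
  then have "X -` B \<inter> space M \<in> Gen" using assms(2) unfolding gen_ev_def by blast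
  then show "X -` B \<inter> space (sigma (space M) Gen) \<in> sets (sigma (space M) Gen)"
    using assms(1) by (simp add: sets_measure_of_conv space_measure_of_conv sigma_sets.Basic)
qed

lemma sigma_gen_subalgebra:
  assumes "Gen \<subseteq> sets M"
  shows "subalgebra M (sigma (space M) Gen)"
proof -
  have p: "Gen \<subseteq> Pow (space M)" using assms sets.sets_into_space by blast
  show ?thesis unfolding subalgebra_def using p assms
    by (simp add: sets_measure_of_conv space_measure_of_conv sets.sigma_sets_subset)
qed

lemma gen_ev_sets: "X \<in> measurable M N \<Longrightarrow> gen_ev M N X \<subseteq> sets M"
  unfolding gen_ev_def by (auto intro: measurable_sets)

lemma gen_ev_Pow: "gen_ev M N X \<subseteq> Pow (space M)"
  unfolding gen_ev_def by auto

lemma Galg_facts: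
  fixes M :: "'w measure" and S :: "nat \<Rightarrow> nat \<Rightarrow> 'w \<Rightarrow> 's" and A :: "nat \<Rightarrow> nat \<Rightarrow> 'w \<Rightarrow> 'a"
  assumes meas_S: "\<forall>k\<in>{1..K}. \<forall>h\<in>{1..H+1}. S k h \<in> measurable M (count_space UNIV)"
    and meas_A: "\<forall>k\<in>{1..K}. \<forall>h\<in>{1..H}. A k h \<in> measurable M (count_space UNIV)"
    and meas_R: "\<forall>k\<in>{1..K}. \<forall>h\<in>{1..H}. R k h \<in> borel_measurable M"
    and meas_C: "\<forall>k\<in>{1..K}. \<forall>h\<in>{1..H}. C k h \<in> borel_measurable M"
    and k: "k \<in> {1..K}" and h: "h \<in> {1..H}" and st: "1 \<le> st"
  shows "subalgebra M (Galg M H S A R C k h st)"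
    "\<And>j. j \<in> {1..<k} \<Longrightarrow> S j h \<in> measurable (Galg M H S A R C k h st) (count_space UNIV)"
    "\<And>j. j \<in> {1..<k} \<Longrightarrow> S j (Suc h) \<in> measurable (Galg M H S A R C k h st) (count_space UNIV)"
    "\<And>j. j \<in> {1..<k} \<Longrightarrow> A j h \<in> measurable (Galg M H S A R C k h st) (count_space UNIV)"
    "\<And>j. j \<in> {1..<k} \<Longrightarrow> C j h \<in> borel_measurable (Galg M H S A R C k h st)"
    "S k h \<in> measurable (Galg M H S A R C k h st) (count_space UNIV)"
    "A k h \<in> measurable (Galg M H S A R C k h st) (count_space UNIV)"
proof -
  define Gen where "Gen = ((\<Union>j\<in>{1..<k}. ep_events M H S A R C j)
    \<union> (\<Union>i\<in>{1..h}. gen_ev M (count_space UNIV) (S k i))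
    \<union> (\<Union>i\<in>{1..<h}. gen_ev M (count_space UNIV) (A k i) \<union> gen_ev M borel (R k i) \<union> gen_ev M borel (C k i))
    \<union> (if 1 \<le> st then gen_ev M (count_space UNIV) (A k h) else {})
    \<union> (if 2 \<le> st then gen_ev M borel (R k h) else {})
    \<union> (if 3 \<le> st then gen_ev M borel (C k h) else {}))"
  have G: "Galg M H S A R C k h st = sigma (space M) Gen" unfolding Galg_def Gen_def by simp
  have P: "Gen \<subseteq> Pow (space M)" unfolding Gen_def ep_events_def gen_ev_def by auto
  have "Gen \<subseteq> sets M"
  proof -
    have e: "ep_events M H S A R C j \<subseteq> sets M" if "j \<in> {1..<k}" for j
    proof -
      have j: "j \<in> {1..K}" using that k by auto
      have 1: "gen_ev M (count_space UNIV) (S j i) \<subseteq> sets M" if "i \<in> {1..H+1}" for i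
        using j that meas_S gen_ev_sets by blast
      have 2: "gen_ev M (count_space UNIV) (A j i) \<subseteq> sets M" "gen_ev M borel (R j i) \<subseteq> sets M"
        "gen_ev M borel (C j i) \<subseteq> sets M" if "i \<in> {1..H}" for i
        using j that meas_A meas_R meas_C gen_ev_sets by blast+
      show ?thesis unfolding ep_events_def using 1 2 by blast
    qed
    have a: "gen_ev M (count_space UNIV) (S k i) \<subseteq> sets M" if "i \<in> {1..h}" for i
      using that h k meas_S gen_ev_sets by (metis add.commute atLeastAtMost_iff le_add2 order.trans)
    have b: "gen_ev M (count_space UNIV) (A k i) \<subseteq> sets M" "gen_ev M borel (R k i) \<subseteq> sets M" "gen_ev M borel (C k i) \<subseteq> sets M"
      if "i \<in> {1..<h}" for i
      using that h k meas_A meas_R meas_C gen_ev_sets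
      by (meson atLeastAtMost_iff atLeastLessThan_iff less_imp_le_nat order_trans)+
    have c: "gen_ev M (count_space UNIV) (A k h) \<subseteq> sets M" "gen_ev M borel (R k h) \<subseteq> sets M"
       "gen_ev M borel (C k h) \<subseteq> sets M"
      using h k meas_A meas_R meas_C gen_ev_sets by blast+
    show ?thesis unfolding Gen_def by (intro Un_least UN_least) (simp_all add: e a b c)
  qed
  then show "subalgebra M (Galg M H S A R C k h st)" unfolding G by (rule sigma_gen_subalgebra)
  have ep: "ep_events M H S A R C j \<subseteq> Gen" if "j \<in> {1..<k}" for j using that unfolding Gen_def by blast
  have epS: "gen_ev M (count_space UNIV) (S j i) \<subseteq> Gen" if "j \<in> {1..<k}" "i \<in> {1..H+1}" for j i
    using ep[OF that(1)] that(2) unfolding ep_events_def by blast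
  have epA: "gen_ev M (count_space UNIV) (A j i) \<subseteq> Gen" "gen_ev M borel (C j i) \<subseteq> Gen"
    if "j \<in> {1..<k}" "i \<in> {1..H}" for j i
    using ep[OF that(1)] that(2) unfolding ep_events_def by blast+
  show "S j h \<in> measurable (Galg M H S A R C k h st) (count_space UNIV)" if "j \<in> {1..<k}" for j
    unfolding G using that h by (intro sigma_gen_measurable[OF P] epS) auto
  show "S j (Suc h) \<in> measurable (Galg M H S A R C k h st) (count_space UNIV)" if "j \<in> {1..<k}" for j
    unfolding G using that h by (intro sigma_gen_measurable[OF P] epS) auto
  show "A j h \<in> measurable (Galg M H S A R C k h st) (count_space UNIV)" if "j \<in> {1..<k}" for j
    unfolding G using that h by (intro sigma_gen_measurable[OF P] epA) auto
  show "C j h \<in> borel_measurable (Galg M H S A R C k h st)" if "j \<in> {1..<k}" for j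
    unfolding G using that h by (intro sigma_gen_measurable[OF P] epA) auto
  show "S k h \<in> measurable (Galg M H S A R C k h st) (count_space UNIV)"
    unfolding G using h by (intro sigma_gen_measurable[OF P]) (auto simp: Gen_def)
  show "A k h \<in> measurable (Galg M H S A R C k h st) (count_space UNIV)"
    unfolding G using h st by (intro sigma_gen_measurable[OF P]) (auto simp: Gen_def)
qed

lemma SUP_min_mult:
  fixes a c :: real assumes "0 \<le> a" "0 \<le> c"
  shows "(SUP m::nat. ennreal (min a (real m) * c)) = ennreal (a * c)"
proof (rule antisym)
  show "(SUP m::nat. ennreal (min a (real m) * c)) \<le> ennreal (a * c)"
    by (rule SUP_least) (use assms in \<open>auto intro!: ennreal_leI mult_right_mono\<close>)
  obtain m :: nat where "a \<le> real m" using real_arch_simple by blast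
  then have "ennreal (a * c) = ennreal (min a (real m) * c)" by simp
  also have "\<dots> \<le> (SUP m::nat. ennreal (min a (real m) * c))" by (rule SUP_upper) auto
  finally show "ennreal (a * c) \<le> (SUP m::nat. ennreal (min a (real m) * c))" .
qed

lemma cond_exp_nn_bound:
  assumes M: "prob_space M" and F: "subalgebra M F"
    and f: "f \<in> borel_measurable F" "\<And>w. 0 \<le> f w"
    and g: "integrable M g" "\<And>w. 0 \<le> g w"
    and b: "AE w in M. real_cond_exp M F g w \<le> b" "0 \<le> b"
  shows "(\<integral>\<^sup>+w. ennreal (f w * g w) \<partial>M) \<le> (\<integral>\<^sup>+w. ennreal (f w * b) \<partial>M)"
proof -
  interpret prob_space M by (rule M)
  have sfs: "sigma_finite_subalgebra M F"
    by (rule finite_measure_subalgebra_is_sigma_finite) (simp add: finite_measure_subalgebra_def finite_measure_subalgebra_axioms_def F finite_measure_axioms)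
  interpret sigma_finite_subalgebra M F using sfs unfolding sigma_finite_subalgebra_def by auto
  have fM[measurable]: "f \<in> borel_measurable M" using measurable_from_subalg[OF F f(1)] .
  have gM[measurable]: "g \<in> borel_measurable M" using g(1) by auto
  define fm where "fm m w = min (f w) (real m)" for m :: nat and w
  have fmF: "fm m \<in> borel_measurable F" for m unfolding fm_def using f(1) by measurable
  have fmM[measurable]: "fm m \<in> borel_measurable M" for m unfolding fm_def by measurable
  have fm0: "0 \<le> fm m w" for m w unfolding fm_def using f(2) by simp
  have fmb: "fm m w \<le> real m" for m w unfolding fm_def by simp
  have step: "(\<integral>\<^sup>+w. ennreal (fm m w * g w) \<partial>M) \<le> (\<integral>\<^sup>+w. ennreal (f w * b) \<partial>M)" for m
  proof -
    have i1: "integrable M (\<lambda>w. fm m w * g w)"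
    proof (rule Bochner_Integration.integrable_bound[of M "\<lambda>x. real m * g x"])
      show "integrable M (\<lambda>x. real m * g x)" using g(1) by simp
      show "AE x in M. norm (fm m x * g x) \<le> norm (real m * g x)"
        using fm0 fmb g(2) by (auto simp: abs_mult intro!: mult_right_mono)
    qed measurable
    have i2: "integrable M (\<lambda>w. fm m w * b)"
    proof (rule Bochner_Integration.integrable_bound[of M "\<lambda>x. real m * b"])
      show "integrable M (\<lambda>x. real m * b)" by simp
      show "AE x in M. norm (fm m x * b) \<le> norm (real m * b)"
        using fm0 fmb b(2) by (auto simp: abs_mult intro!: mult_right_mono)
    qed measurable
    have "(\<integral>\<^sup>+w. ennreal (fm m w * g w) \<partial>M) = ennreal (\<integral>w. fm m w * g w \<partial>M)"
      by (rule nn_integral_eq_integral[OF i1]) (use fm0 g(2) in auto)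
    also have "(\<integral>w. fm m w * g w \<partial>M) = (\<integral>w. fm m w * real_cond_exp M F g w \<partial>M)"
      by (rule real_cond_exp_intg(2)[OF i1 fmF gM, symmetric])
    also have "\<dots> \<le> (\<integral>w. fm m w * b \<partial>M)"
      by (rule integral_mono_AE[OF real_cond_exp_intg(1)[OF i1 fmF gM] i2])
        (use b(1) fm0 in \<open>auto intro: mult_left_mono\<close>)
    also have "ennreal (\<integral>w. fm m w * b \<partial>M) = (\<integral>\<^sup>+w. ennreal (fm m w * b) \<partial>M)"
      by (rule nn_integral_eq_integral[OF i2, symmetric]) (use fm0 b(2) in auto)
    also have "\<dots> \<le> (\<integral>\<^sup>+w. ennreal (f w * b) \<partial>M)"
      by (rule nn_integral_mono) (use b(2) f(2) in \<open>auto simp: fm_def intro!: ennreal_leI mult_right_mono\<close>)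
    finally show ?thesis by (simp add: ennreal_leI)
  qed
  have "(\<integral>\<^sup>+w. ennreal (f w * g w) \<partial>M) = (\<integral>\<^sup>+w. (SUP m. ennreal (fm m w * g w)) \<partial>M)"
    unfolding fm_def by (rule nn_integral_cong) (simp add: SUP_min_mult f(2) g(2))
  also have "\<dots> = (SUP m. (\<integral>\<^sup>+w. ennreal (fm m w * g w) \<partial>M))"
  proof (rule nn_integral_monotone_convergence_SUP)
    show "incseq (\<lambda>m w. ennreal (fm m w * g w))"
      by (auto simp: incseq_def le_fun_def fm_def intro!: ennreal_leI mult_right_mono g(2))
  qed measurable
  also have "\<dots> \<le> (\<integral>\<^sup>+w. ennreal (f w * b) \<partial>M)"
    by (rule SUP_least) (rule step)
  finally show ?thesis .
qed

lemma supermart: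
  fixes Y :: "nat \<Rightarrow> 'w \<Rightarrow> real" and I :: "nat \<Rightarrow> 'w \<Rightarrow> bool" and G :: "nat \<Rightarrow> 'w measure"
  assumes M: "prob_space M"
    and subalg: "\<forall>k\<in>{1..K}. subalgebra M (G k)"
    and IG: "\<forall>k\<in>{1..K}. \<forall>j\<in>{1..k}. Measurable.pred (G k) (I j)"
    and YG: "\<forall>k\<in>{1..K}. \<forall>j\<in>{1..<k}. Y j \<in> borel_measurable (G k)"
    and YM: "\<forall>k\<in>{1..K}. Y k \<in> borel_measurable M"
    and sub: "\<forall>k\<in>{1..K}. \<forall>f. f \<in> borel_measurable (G k) \<longrightarrow> (\<forall>w. 0 \<le> f w) \<longrightarrow>
        (\<integral>\<^sup>+w. ennreal (f w * exp (Y k w)) \<partial>M) \<le> (\<integral>\<^sup>+w. ennreal (f w * exp v) \<partial>M)"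
  shows "m \<le> K \<Longrightarrow> (\<integral>\<^sup>+w. ennreal (exp (\<Sum>j\<in>{1..m}. if I j w then Y j w - v else 0)) \<partial>M) \<le> 1"
proof (induction m)
  case 0
  interpret prob_space M by (rule M)
  show ?case by (simp add: emeasure_space_1)
next
  case (Suc m)
  define k where "k = Suc m"
  have k: "k \<in> {1..K}" using Suc.prems k_def by auto
  define Sm where "Sm w = (\<Sum>j\<in>{1..m}. if I j w then Y j w - v else 0)" for w
  have subk: "subalgebra M (G k)" using subalg k by blast
  have SmG: "Sm \<in> borel_measurable (G k)"
    unfolding Sm_def
  proof (intro borel_measurable_sum)
    fix j assume j: "j \<in> {1..m}"
    then have "j \<in> {1..<k}" "j \<in> {1..k}" using k_def by auto
    then have [measurable]: "Measurable.pred (G k) (I j)" "Y j \<in> borel_measurable (G k)"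
      using IG YG k by auto
    show "(\<lambda>w. if I j w then Y j w - v else 0) \<in> borel_measurable (G k)" by measurable
  qed
  have IkG: "Measurable.pred (G k) (I k)" using IG k by auto
  define f1 where "f1 w = exp (Sm w) * (if I k w then 0 else 1)" for w
  define f2 where "f2 w = exp (Sm w) * (if I k w then exp (- v) else 0)" for w
  have f1G: "f1 \<in> borel_measurable (G k)" unfolding f1_def using SmG IkG by measurable
  have f2G: "f2 \<in> borel_measurable (G k)" unfolding f2_def using SmG IkG by measurable
  have f1M[measurable]: "f1 \<in> borel_measurable M" by (rule measurable_from_subalg[OF subk f1G])
  have f2M[measurable]: "f2 \<in> borel_measurable M" by (rule measurable_from_subalg[OF subk f2G])
  have YkM[measurable]: "Y k \<in> borel_measurable M"
    using YM k by blast
  have f10: "0 \<le> f1 w" and f20: "0 \<le> f2 w" for w unfolding f1_def f2_def by auto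
  have eq: "exp (\<Sum>j\<in>{1..Suc m}. if I j w then Y j w - v else 0) = f1 w + f2 w * exp (Y k w)" for w
    unfolding f1_def f2_def Sm_def k_def by (simp add: exp_add exp_diff exp_minus field_simps)
  have "(\<integral>\<^sup>+w. ennreal (exp (\<Sum>j\<in>{1..Suc m}. if I j w then Y j w - v else 0)) \<partial>M)
      = (\<integral>\<^sup>+w. ennreal (f1 w) + ennreal (f2 w * exp (Y k w)) \<partial>M)"
    unfolding eq using f10 f20 by (intro nn_integral_cong) (simp add: ennreal_plus)
  also have "\<dots> = (\<integral>\<^sup>+w. ennreal (f1 w) \<partial>M) + (\<integral>\<^sup>+w. ennreal (f2 w * exp (Y k w)) \<partial>M)"
    by (rule nn_integral_add) measurable
  also have "\<dots> \<le> (\<integral>\<^sup>+w. ennreal (f1 w) \<partial>M) + (\<integral>\<^sup>+w. ennreal (f2 w * exp v) \<partial>M)"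
    using sub k f2G f20 by (intro add_left_mono) blast
  also have "\<dots> = (\<integral>\<^sup>+w. ennreal (f1 w) + ennreal (f2 w * exp v) \<partial>M)"
    by (rule nn_integral_add[symmetric]) measurable
  also have "\<dots> = (\<integral>\<^sup>+w. ennreal (exp (Sm w)) \<partial>M)"
    using f10 f20 by (intro nn_integral_cong) (simp add: f1_def f2_def flip: ennreal_plus exp_add)
  also have "\<dots> \<le> 1" using Suc by (simp add: Sm_def)
  finally show ?case .
qed

lemma conc:
  fixes X :: "nat \<Rightarrow> 'w \<Rightarrow> real" and I :: "nat \<Rightarrow> 'w \<Rightarrow> bool" and G :: "nat \<Rightarrow> 'w measure"
  assumes M: "prob_space M"
    and subalg: "\<forall>k\<in>{1..K}. subalgebra M (G k)"
    and IG: "\<forall>k\<in>{1..K}. \<forall>j\<in>{1..k}. Measurable.pred (G k) (I j)"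
    and XG: "\<forall>k\<in>{1..K}. \<forall>j\<in>{1..<k}. X j \<in> borel_measurable (G k)"
    and XM: "\<forall>k\<in>{1..K}. X k \<in> borel_measurable M"
    and sub: "\<forall>k\<in>{1..K}. \<forall>f. f \<in> borel_measurable (G k) \<longrightarrow> (\<forall>w. 0 \<le> f w) \<longrightarrow>
        (\<integral>\<^sup>+w. ennreal (f w * exp (l * X k w)) \<partial>M) \<le> (\<integral>\<^sup>+w. ennreal (f w * exp (l^2/4)) \<partial>M)"
    and l: "0 < l"
  shows "{w\<in>space M. t \<le> (\<Sum>j\<in>{1..K}. if I j w then X j w else 0)
            \<and> (\<Sum>j\<in>{1..K}. if I j w then 1 else 0) \<le> real n} \<in> sets M"
    "measure M {w\<in>space M. t \<le> (\<Sum>j\<in>{1..K}. if I j w then X j w else 0)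
            \<and> (\<Sum>j\<in>{1..K}. if I j w then 1 else 0) \<le> real n} \<le> exp (-(l*t - l^2 * real n / 4))"
proof -
  interpret prob_space M by (rule M)
  define a where "a = l*t - l^2 * real n / 4"
  define SK where "SK w = (\<Sum>j\<in>{1..K}. if I j w then l * X j w - l^2/4 else 0)" for w
  have IM[measurable]: "Measurable.pred M (I j)" if "j \<in> {1..K}" for j
  proof -
    have "Measurable.pred (G j) (I j)" using IG that by auto
    moreover have "subalgebra M (G j)" using subalg that by auto
    ultimately show ?thesis using measurable_from_subalg by blast
  qed
  have SKM[measurable]: "SK \<in> borel_measurable M"
    unfolding SK_def
  proof (intro borel_measurable_sum)
    fix j assume j: "j \<in> {1..K}"
    then have [measurable]: "Measurable.pred M (I j)" "X j \<in> borel_measurable M" using IM XM by auto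
    show "(\<lambda>w. if I j w then l * X j w - l^2/4 else 0) \<in> borel_measurable M" by measurable
  qed
  have s1[measurable]: "(\<lambda>w. \<Sum>j\<in>{1..K}. if I j w then X j w else 0) \<in> borel_measurable M"
  proof (intro borel_measurable_sum)
    fix j assume j: "j \<in> {1..K}"
    then have [measurable]: "Measurable.pred M (I j)" "X j \<in> borel_measurable M" using IM XM by auto
    show "(\<lambda>w. if I j w then X j w else 0) \<in> borel_measurable M" by measurable
  qed
  have s2[measurable]: "(\<lambda>w. \<Sum>j\<in>{1..K}. if I j w then 1 else 0::real) \<in> borel_measurable M"
  proof (intro borel_measurable_sum)
    fix j assume j: "j \<in> {1..K}"
    then have [measurable]: "Measurable.pred M (I j)" using IM by auto
    show "(\<lambda>w. if I j w then 1 else 0::real) \<in> borel_measurable M" by measurable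
  qed
  show "{w\<in>space M. t \<le> (\<Sum>j\<in>{1..K}. if I j w then X j w else 0)
            \<and> (\<Sum>j\<in>{1..K}. if I j w then 1 else 0) \<le> real n} \<in> sets M" by measurable
  have int: "(\<integral>\<^sup>+w. ennreal (exp (SK w)) \<partial>M) \<le> 1"
    unfolding SK_def
    by (rule supermart[OF M subalg IG, where Y="\<lambda>j w. l * X j w"]) (use XG XM sub in \<open>auto intro!: borel_measurable_times\<close>)
  have SKeq: "SK w = l * (\<Sum>j\<in>{1..K}. if I j w then X j w else 0) - l^2/4 * (\<Sum>j\<in>{1..K}. if I j w then 1 else 0)" for w
    unfolding SK_def by (simp add: sum_distrib_left sum_subtractf[symmetric] if_distrib cong: if_cong)
  have sub_ev: "{w\<in>space M. t \<le> (\<Sum>j\<in>{1..K}. if I j w then X j w else 0)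
            \<and> (\<Sum>j\<in>{1..K}. if I j w then 1 else 0) \<le> real n}
      \<subseteq> {w\<in>space M. 1 \<le> ennreal (exp (-a)) * ennreal (exp (SK w))}"
  proof safe
    fix w assume w: "w \<in> space M" and t: "t \<le> (\<Sum>j\<in>{1..K}. if I j w then X j w else 0)"
      and n: "(\<Sum>j\<in>{1..K}. if I j w then 1 else 0) \<le> real n"
    have "l * t \<le> l * (\<Sum>j\<in>{1..K}. if I j w then X j w else 0)" using t l by simp
    moreover have "l^2/4 * (\<Sum>j\<in>{1..K}. if I j w then 1 else 0) \<le> l^2/4 * real n" using n by (intro mult_left_mono) auto
    ultimately have "a \<le> SK w" unfolding SKeq a_def by linarith
    then have "1 \<le> exp (SK w - a)" by simp
    also have "exp (SK w - a) = exp (-a) * exp (SK w)" by (simp add: exp_diff exp_minus field_simps)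
    finally show "1 \<le> ennreal (exp (-a)) * ennreal (exp (SK w))"
      by (simp add: ennreal_mult[symmetric] ennreal_1[symmetric] del: ennreal_1)
  qed
  have "emeasure M {w\<in>space M. 1 \<le> ennreal (exp (-a)) * ennreal (exp (SK w))}
      \<le> ennreal (exp (-a)) * (\<integral>\<^sup>+w. ennreal (exp (SK w)) * indicator (space M) w \<partial>M)"
    by (rule nn_integral_Markov_inequality) measurable
  also have "(\<integral>\<^sup>+w. ennreal (exp (SK w)) * indicator (space M) w \<partial>M) = (\<integral>\<^sup>+w. ennreal (exp (SK w)) \<partial>M)"
    by (rule nn_integral_cong) auto
  also have "ennreal (exp (-a)) * \<dots> \<le> ennreal (exp (-a)) * 1"
    by (rule mult_left_mono[OF int]) simp
  finally have mk: "emeasure M {w\<in>space M. 1 \<le> ennreal (exp (-a)) * ennreal (exp (SK w))} \<le> ennreal (exp (-a))"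
    by simp
  have mset: "{w\<in>space M. 1 \<le> ennreal (exp (-a)) * ennreal (exp (SK w))} \<in> sets M" by measurable
  have "emeasure M {w\<in>space M. t \<le> (\<Sum>j\<in>{1..K}. if I j w then X j w else 0)
            \<and> (\<Sum>j\<in>{1..K}. if I j w then 1 else 0) \<le> real n} \<le> ennreal (exp (-a))"
    using order_trans[OF emeasure_mono[OF sub_ev mset] mk] .
  then show "measure M {w\<in>space M. t \<le> (\<Sum>j\<in>{1..K}. if I j w then X j w else 0)
            \<and> (\<Sum>j\<in>{1..K}. if I j w then 1 else 0) \<le> real n} \<le> exp (-(l*t - l^2 * real n / 4))"
    unfolding a_def by (simp add: emeasure_eq_measure)
qed

lemma sum_dist_bounds:
  fixes p f :: "'x::finite \<Rightarrow> real"
  assumes "is_dist p" "\<And>x. lo \<le> f x" "\<And>x. f x \<le> hi"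
  shows "lo \<le> (\<Sum>x\<in>UNIV. p x * f x) \<and> (\<Sum>x\<in>UNIV. p x * f x) \<le> hi"
proof -
  have p: "\<And>x. 0 \<le> p x" "(\<Sum>x\<in>UNIV. p x) = 1" using assms(1) unfolding is_dist_def by auto
  have "(\<Sum>x\<in>UNIV. p x * lo) \<le> (\<Sum>x\<in>UNIV. p x * f x)"
    by (rule sum_mono) (use p assms in \<open>auto intro: mult_left_mono\<close>)
  moreover have "(\<Sum>x\<in>UNIV. p x * f x) \<le> (\<Sum>x\<in>UNIV. p x * hi)"
    by (rule sum_mono) (use p assms in \<open>auto intro: mult_left_mono\<close>)
  moreover have "(\<Sum>x\<in>UNIV. p x * lo) = lo" "(\<Sum>x\<in>UNIV. p x * hi) = hi"
    using p(2) by (simp_all add: sum_distrib_right[symmetric])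
  ultimately show ?thesis by simp
qed

lemma Vr_bounds:
  fixes q :: "nat \<Rightarrow> 's::finite \<Rightarrow> 'a::finite \<Rightarrow> real"
  assumes q: "is_policy H q" and P: "\<forall>h\<in>{1..H}. \<forall>s a. is_dist (P h s a)"
    and g: "\<forall>h\<in>{1..H}. \<forall>s a. 0 \<le> g h s a \<and> g h s a \<le> 1"
  shows "1 \<le> h \<Longrightarrow> h + n \<le> H + 1 \<Longrightarrow> 0 \<le> Vr n h q g P s \<and> Vr n h q g P s \<le> real n"
proof (induction n arbitrary: h s)
  case 0
  then show ?case by simp
next
  case (Suc n)
  have h: "h \<in> {1..H}" using Suc.prems by auto
  have IH: "0 \<le> Vr n (Suc h) q g P s' \<and> Vr n (Suc h) q g P s' \<le> real n" for s'
    using Suc.IH[of "Suc h"] Suc.prems by auto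
  have inner: "0 \<le> g h s a + (\<Sum>s'\<in>UNIV. P h s a s' * Vr n (Suc h) q g P s')
     \<and> g h s a + (\<Sum>s'\<in>UNIV. P h s a s' * Vr n (Suc h) q g P s') \<le> real (Suc n)" for a
  proof -
    have "0 \<le> (\<Sum>s'\<in>UNIV. P h s a s' * Vr n (Suc h) q g P s') \<and> (\<Sum>s'\<in>UNIV. P h s a s' * Vr n (Suc h) q g P s') \<le> real n"
      using sum_dist_bounds[of "P h s a" 0 "\<lambda>s'. Vr n (Suc h) q g P s'" "real n"] P h IH by auto
    moreover have "0 \<le> g h s a" "g h s a \<le> 1" using g h by auto
    ultimately show ?thesis by simp
  qed
  have "is_dist (q h s)" using q h unfolding is_policy_def by auto
  then show ?case
    using sum_dist_bounds[of "q h s" 0 _ "real (Suc n)"] inner by simp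
qed

lemma Vr_sim:
  fixes q :: "nat \<Rightarrow> 's::finite \<Rightarrow> 'a::finite \<Rightarrow> real"
  assumes q: "is_policy H q" and P: "\<forall>h\<in>{1..H}. \<forall>s a. is_dist (P h s a)"
    and g: "\<forall>h\<in>{1..H}. \<forall>s a. 0 \<le> g h s a \<and> g h s a \<le> 1"
    and P'0: "\<forall>h s a s'. 0 \<le> P' h s a s'"
    and b0: "\<forall>h s a. 0 \<le> b h s a"
    and Pb: "\<forall>h\<in>{1..H}. \<forall>s a s'. P h s a s' - P' h s a s' \<le> b h s a"
    and gb: "\<forall>h\<in>{1..H}. \<forall>s a. g h s a + real CARD('s) * real H * b h s a \<le> g' h s a"
  shows "1 \<le> h \<Longrightarrow> h + n \<le> H + 1 \<Longrightarrow> Vr n h q g P s \<le> Vr n h q g' P' s"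
proof (induction n arbitrary: h s)
  case 0
  then show ?case by simp
next
  case (Suc n)
  have h: "h \<in> {1..H}" using Suc.prems by auto
  have IH: "Vr n (Suc h) q g P s' \<le> Vr n (Suc h) q g' P' s'" for s'
    using Suc.IH[of "Suc h"] Suc.prems by auto
  have Vb: "0 \<le> Vr n (Suc h) q g P s' \<and> Vr n (Suc h) q g P s' \<le> real H" for s'
    using Vr_bounds[OF q P g, of "Suc h" n s'] Suc.prems by auto
  have inner: "g h s a + (\<Sum>s'\<in>UNIV. P h s a s' * Vr n (Suc h) q g P s')
     \<le> g' h s a + (\<Sum>s'\<in>UNIV. P' h s a s' * Vr n (Suc h) q g' P' s')" for a
  proof -
    have e1: "(\<Sum>s'\<in>UNIV. P h s a s' * Vr n (Suc h) q g P s')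
        = (\<Sum>s'\<in>UNIV. P' h s a s' * Vr n (Suc h) q g P s') + (\<Sum>s'\<in>UNIV. (P h s a s' - P' h s a s') * Vr n (Suc h) q g P s')"
      by (simp add: sum.distrib[symmetric] algebra_simps)
    have e2: "(\<Sum>s'\<in>UNIV. P' h s a s' * Vr n (Suc h) q g P s') \<le> (\<Sum>s'\<in>UNIV. P' h s a s' * Vr n (Suc h) q g' P' s')"
      by (rule sum_mono) (use P'0 IH in \<open>auto intro: mult_left_mono\<close>)
    have e3: "(\<Sum>s'\<in>UNIV. (P h s a s' - P' h s a s') * Vr n (Suc h) q g P s') \<le> (\<Sum>s'\<in>(UNIV::'s set). b h s a * real H)"
    proof (rule sum_mono)
      fix s' :: 's
      have "(P h s a s' - P' h s a s') * Vr n (Suc h) q g P s' \<le> b h s a * Vr n (Suc h) q g P s'"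
        using Pb h Vb[of s'] by (intro mult_right_mono) auto
      also have "\<dots> \<le> b h s a * real H" using b0 Vb[of s'] by (intro mult_left_mono) auto
      finally show "(P h s a s' - P' h s a s') * Vr n (Suc h) q g P s' \<le> b h s a * real H" .
    qed
    have e4: "(\<Sum>s'\<in>(UNIV::'s set). b h s a * real H) = real CARD('s) * real H * b h s a" by simp
    have e5: "g h s a + real CARD('s) * real H * b h s a \<le> g' h s a" using gb h by blast
    show ?thesis using e1 e2 e3 e4 e5 by linarith
  qed
  have "\<forall>a. 0 \<le> q h s a" using q h unfolding is_policy_def is_dist_def by auto
  then show ?case
    by (simp, intro sum_mono mult_left_mono inner) auto
qed

lemma V1_sim:
  fixes q :: "nat \<Rightarrow> 's::finite \<Rightarrow> 'a::finite \<Rightarrow> real"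
  assumes q: "is_policy H q" and P: "\<forall>h\<in>{1..H}. \<forall>s a. is_dist (P h s a)"
    and g: "\<forall>h\<in>{1..H}. \<forall>s a. 0 \<le> g h s a \<and> g h s a \<le> 1"
    and P'0: "\<forall>h s a s'. 0 \<le> P' h s a s'"
    and b0: "\<forall>h s a. 0 \<le> b h s a"
    and Pb: "\<forall>h\<in>{1..H}. \<forall>s a s'. P h s a s' - P' h s a s' \<le> b h s a"
    and gb: "\<forall>h\<in>{1..H}. \<forall>s a. g h s a + real CARD('s) * real H * b h s a \<le> g' h s a"
    and mu: "is_dist \<mu>"
  shows "V1 H q \<mu> g P \<le> V1 H q \<mu> g' P'"
  unfolding V1_def Vh_def
  using mu Vr_sim[OF q P g P'0 b0 Pb gb, of 1 "H + 1 - 1"]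
  by (intro sum_mono mult_left_mono) (auto simp: is_dist_def)

lemma bern_scalar:
  fixes p l :: real assumes p: "0 \<le> p" "p \<le> 1" and l: "0 \<le> l"
  shows "exp (l * p) - (exp (l * p) - exp (l * (p - 1))) * p \<le> exp (l^2 / 4)"
proof -
  define y where "y = 1 + (1 - p) * (exp l - 1)"
  have y1: "1 \<le> y" unfolding y_def using p l by (simp add: mult_nonneg_nonneg)
  have h1: "- l * (1 - p) + ln y \<le> l^2 / 8"
    using Hoeffdings_lemma_aux[OF l, of "1 - p"] p unfolding y_def by simp
  have h2: "exp (- l * (1 - p) + ln y) \<le> exp (l^2/8)" using h1 by (simp only: exp_le_cancel_iff)
  have h3: "exp (- l * (1 - p) + ln y) = exp (- l * (1 - p)) * y" unfolding exp_add using y1 by simp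
  have "exp (- l * (1 - p)) * y \<le> exp (l^2/8)" using h2 h3 by linarith
  moreover have "exp (- l * (1 - p)) * y = exp (l * p) - (exp (l * p) - exp (l * (p - 1))) * p"
    unfolding y_def by (simp add: algebra_simps flip: exp_add)
  moreover have "exp (l^2/8) \<le> exp (l^2/4)" by simp
  ultimately show ?thesis by linarith
qed

lemma bern_sub:
  assumes M: "prob_space M" and F: "subalgebra M F"
    and p: "p \<in> borel_measurable F" "\<And>w. 0 \<le> p w \<and> p w \<le> 1"
    and Xs: "Xs \<in> sets M"
    and ce: "AE w in M. real_cond_exp M F (indicator Xs) w = p w"
    and l: "0 \<le> l"
    and f: "f \<in> borel_measurable F" "\<And>w. 0 \<le> f w"
  shows "(\<integral>\<^sup>+w. ennreal (f w * exp (l * (p w - indicator Xs w))) \<partial>M) \<le> (\<integral>\<^sup>+w. ennreal (f w * exp (l^2/4)) \<partial>M)"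
proof (rule cond_exp_nn_bound[OF M F f])
  interpret prob_space M by (rule M)
  have sfs: "sigma_finite_subalgebra M F"
    by (rule finite_measure_subalgebra_is_sigma_finite) (simp add: finite_measure_subalgebra_def finite_measure_subalgebra_axioms_def F finite_measure_axioms)
  interpret sigma_finite_subalgebra M F using sfs unfolding sigma_finite_subalgebra_def by auto
  have pM[measurable]: "p \<in> borel_measurable M" using measurable_from_subalg[OF F p(1)] .
  have XsM[measurable]: "Xs \<in> sets M" by (rule Xs)
  define e1 where "e1 w = exp (l * p w)" for w
  define d where "d w = exp (l * p w) - exp (l * (p w - 1))" for w
  have e1F: "e1 \<in> borel_measurable F" unfolding e1_def using p(1) by measurable
  have dF: "d \<in> borel_measurable F" unfolding d_def using p(1) by measurable
  have e1M[measurable]: "e1 \<in> borel_measurable M" using measurable_from_subalg[OF F e1F] .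
  have dM[measurable]: "d \<in> borel_measurable M" using measurable_from_subalg[OF F dF] .
  have e1b: "\<bar>e1 w\<bar> \<le> exp l" for w unfolding e1_def using p(2)[of w] l by (simp add: mult_left_le)
  have db: "\<bar>d w\<bar> \<le> exp l" for w
  proof -
    have a: "exp (l * (p w - 1)) \<le> exp (l * p w)" using l by (simp add: mult_left_mono)
    have b: "exp (l * p w) \<le> exp l" using p(2)[of w] l by (simp add: mult_left_le)
    have c: "0 < exp (l * (p w - 1))" by simp
    have "0 \<le> d w" "d w \<le> exp l" unfolding d_def using a b c by linarith+
    then show ?thesis by simp
  qed
  have int_e1: "integrable M e1"
    by (rule Bochner_Integration.integrable_bound[of M "\<lambda>_. exp l"]) (use e1b in auto)
  have int_dX: "integrable M (\<lambda>w. d w * indicator Xs w)"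
    by (rule Bochner_Integration.integrable_bound[of M "\<lambda>_. exp l"]) (use db in \<open>auto simp: indicator_def\<close>)
  have int_X: "integrable M (\<lambda>w. indicator Xs w :: real)"
    by (rule Bochner_Integration.integrable_bound[of M "\<lambda>_. 1::real"]) (auto simp: indicator_def)
  have geq: "exp (l * (p w - indicator Xs w)) = e1 w - d w * indicator Xs w" for w
    unfolding e1_def d_def by (simp add: indicator_def)
  show "integrable M (\<lambda>w. exp (l * (p w - indicator Xs w)))"
    unfolding geq using int_e1 int_dX by simp
  show "\<And>w. 0 \<le> exp (l * (p w - indicator Xs w))" by simp
  show "0 \<le> exp (l^2/4)" by simp
  have "AE w in M. real_cond_exp M F (\<lambda>w. exp (l * (p w - indicator Xs w))) w
      = real_cond_exp M F e1 w - real_cond_exp M F (\<lambda>w. d w * indicator Xs w) w"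
    unfolding geq by (rule real_cond_exp_diff[OF int_e1 int_dX])
  moreover have "AE w in M. real_cond_exp M F e1 w = e1 w"
    by (rule real_cond_exp_F_meas[OF int_e1 e1F])
  moreover have "AE w in M. real_cond_exp M F (\<lambda>w. d w * indicator Xs w) w = d w * real_cond_exp M F (indicator Xs) w"
    by (rule real_cond_exp_mult[OF dF _ int_dX]) measurable
  ultimately show "AE w in M. real_cond_exp M F (\<lambda>w. exp (l * (p w - indicator Xs w))) w \<le> exp (l^2/4)"
    using ce
  proof eventually_elim
    case (elim w)
    then have "real_cond_exp M F (\<lambda>w. exp (l * (p w - indicator Xs w))) w = e1 w - d w * p w" by simp
    also have "\<dots> \<le> exp (l^2/4)" unfolding e1_def d_def using bern_scalar[of "p w" l] p(2)[of w] l by simp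
    finally show ?case .
  qed
qed

lemma Ncnt_sum:
  "real (Ncnt S A j h s a w) = (\<Sum>i\<in>{1..<j}. if S i h w = s \<and> A i h w = a then 1 else 0)"
proof -
  have "real (Ncnt S A j h s a w) = (\<Sum>i\<in>{i\<in>{1..<j}. S i h w = s \<and> A i h w = a}. 1)"
    unfolding Ncnt_def by (rule real_of_card)
  also have "\<dots> = (\<Sum>i\<in>{1..<j}. if S i h w = s \<and> A i h w = a then 1 else 0)"
    by (rule sum.inter_filter) simp
  finally show ?thesis .
qed

lemma Ncnt_mono:
  assumes "k \<le> j" shows "Ncnt S A k h s a w \<le> Ncnt S A j h s a w"
  unfolding Ncnt_def by (rule card_mono) (use assms in auto)

lemma Ncnt_less:
  assumes "j < k" "1 \<le> j" "S j h w = s" "A j h w = a"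
  shows "Ncnt S A j h s a w < Ncnt S A k h s a w"
proof -
  have sub: "{i\<in>{1..<j}. S i h w = s \<and> A i h w = a} \<subseteq> {i\<in>{1..<k}. S i h w = s \<and> A i h w = a}"
    using assms(1) by auto
  have "j \<in> {i\<in>{1..<k}. S i h w = s \<and> A i h w = a}" "j \<notin> {i\<in>{1..<j}. S i h w = s \<and> A i h w = a}"
    using assms by auto
  then have ps: "{i\<in>{1..<j}. S i h w = s \<and> A i h w = a} \<subset> {i\<in>{1..<k}. S i h w = s \<and> A i h w = a}"
    using sub by blast
  have "finite {i\<in>{1..<k}. S i h w = s \<and> A i h w = a}" by simp
  from psubset_card_mono[OF this ps] show ?thesis unfolding Ncnt_def .
qed

lemma visits_eq:
  assumes k: "k \<le> K" and n: "Ncnt S A k h s a w = n"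
  shows "{j\<in>{1..K}. S j h w = s \<and> A j h w = a \<and> Ncnt S A j h s a w < n} = {j\<in>{1..<k}. S j h w = s \<and> A j h w = a}"
proof (intro set_eqI iffI)
  fix j assume "j \<in> {j\<in>{1..K}. S j h w = s \<and> A j h w = a \<and> Ncnt S A j h s a w < n}"
  then have j: "1 \<le> j" "S j h w = s" "A j h w = a" "Ncnt S A j h s a w < n" by auto
  have "j < k"
  proof (rule ccontr)
    assume "\<not> j < k"
    then have "k \<le> j" by simp
    then show False using Ncnt_mono[of k j S A h s a w] j(4) n by simp
  qed
  then show "j \<in> {j\<in>{1..<k}. S j h w = s \<and> A j h w = a}" using j by simp
next
  fix j assume "j \<in> {j\<in>{1..<k}. S j h w = s \<and> A j h w = a}"
  then have j: "1 \<le> j" "j < k" "S j h w = s" "A j h w = a" by auto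
  have "Ncnt S A j h s a w < n" using Ncnt_less[of j k S h w s A a] j n by simp
  then show "j \<in> {j\<in>{1..K}. S j h w = s \<and> A j h w = a \<and> Ncnt S A j h s a w < n}" using j k by simp
qed

lemma Ncnt_le: "Ncnt S A k h s a w \<le> k - 1"
proof -
  have "Ncnt S A k h s a w \<le> card {1..<k}" unfolding Ncnt_def by (rule card_mono) auto
  then show ?thesis by simp
qed

lemma sqrt_div_id:
  fixes Z :: real assumes "0 \<le> Z" "0 < n"
  shows "sqrt (Z * n) / n = sqrt (Z / n)"
proof -
  have "sqrt (Z * n) / n = sqrt (Z * n) / sqrt (n^2)" using assms by simp
  also have "\<dots> = sqrt (Z * n / n^2)" by (simp add: real_sqrt_divide)
  also have "Z * n / n^2 = Z / n" using assms by (simp add: power2_eq_square)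
  finally show ?thesis .
qed

lemma exponent_id:
  fixes Z n :: real assumes "0 \<le> Z" "0 < n"
  shows "2 * sqrt (Z / n) * sqrt (Z * n) - (2 * sqrt (Z / n))^2 * n / 4 = Z"
proof -
  have a: "sqrt (Z / n) * sqrt (Z * n) = sqrt (Z / n * (Z * n))" by (rule real_sqrt_mult[symmetric])
  have b: "Z / n * (Z * n) = Z^2" using assms by (simp add: power2_eq_square)
  have 1: "sqrt (Z / n) * sqrt (Z * n) = Z" unfolding a b using assms by simp
  have 2: "(2 * sqrt (Z / n))^2 * n / 4 = Z" using assms by (simp add: power_mult_distrib)
  show ?thesis using 1 2 by (simp add: mult.assoc)
qed

lemma meas_comp2:
  fixes S :: "'w \<Rightarrow> 's::countable" and A :: "'w \<Rightarrow> 'a::countable" and f :: "'s \<Rightarrow> 'a \<Rightarrow> real"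
  assumes "S \<in> measurable G (count_space UNIV)" "A \<in> measurable G (count_space UNIV)"
  shows "(\<lambda>w. f (S w) (A w)) \<in> borel_measurable G"
  apply (rule measurable_compose_countable[OF _ assms(1)])
  apply (rule measurable_compose_countable[OF _ assms(2)])
  by simp

theorem lemma5p1:
  fixes M :: "'w measure"
    and S :: "nat \<Rightarrow> nat \<Rightarrow> 'w \<Rightarrow> 's::finite"
    and A :: "nat \<Rightarrow> nat \<Rightarrow> 'w \<Rightarrow> 'a::finite"
    and R C :: "nat \<Rightarrow> nat \<Rightarrow> 'w \<Rightarrow> real"
    and pol :: "nat \<Rightarrow> 'w \<Rightarrow> (nat \<Rightarrow> 's \<Rightarrow> 'a \<Rightarrow> real)"
    and P :: "nat \<Rightarrow> 's \<Rightarrow> 'a \<Rightarrow> 's \<Rightarrow> real"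
    and r c :: "nat \<Rightarrow> 's \<Rightarrow> 'a \<Rightarrow> real"
    and \<mu> :: "'s \<Rightarrow> real"
    and pi0 :: "nat \<Rightarrow> 's \<Rightarrow> 'a \<Rightarrow> real"
    and H K :: nat
    and \<tau> c0 \<delta> :: real
  assumes M: "prob_space M"
    and H: "1 \<le> H"
    and P_dist: "\<forall>h\<in>{1..H}. \<forall>s a. is_dist (P h s a)"
    and r_range: "\<forall>h\<in>{1..H}. \<forall>s a. 0 \<le> r h s a \<and> r h s a \<le> 1"
    and c_range: "\<forall>h\<in>{1..H}. \<forall>s a. 0 \<le> c h s a \<and> c h s a \<le> 1"
    and mu_dist: "is_dist \<mu>"
    and tau: "0 < \<tau>" "\<tau> \<le> real H"
    and pi0: "is_policy H pi0" "V1 H pi0 \<mu> c P = c0" "c0 < \<tau>"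
    and delta: "0 < \<delta>" "\<delta> < 1"
    and meas_S: "\<forall>k\<in>{1..K}. \<forall>h\<in>{1..H+1}. S k h \<in> measurable M (count_space UNIV)"
    and meas_A: "\<forall>k\<in>{1..K}. \<forall>h\<in>{1..H}. A k h \<in> measurable M (count_space UNIV)"
    and meas_R: "\<forall>k\<in>{1..K}. \<forall>h\<in>{1..H}. R k h \<in> borel_measurable M"
    and meas_C: "\<forall>k\<in>{1..K}. \<forall>h\<in>{1..H}. C k h \<in> borel_measurable M"
    and init: "\<forall>k\<in>{1..K}. \<forall>s. AE w in M.
        real_cond_exp M (Falg M H S A R C (k - 1)) (indicator {w\<in>space M. S k 1 w = s}) w = \<mu> s"
    and pol_meas: "\<forall>k\<in>{1..K}. \<forall>h s a. (\<lambda>w. pol k w h s a) \<in> borel_measurable (Falg M H S A R C (k - 1))"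
    and pol_alg: "\<forall>k\<in>{1..K}. \<forall>w\<in>space M.
        pol k w \<in> PiSet H K \<delta> \<tau> c0 \<mu> pi0 S A C k w \<and>
        (\<forall>q\<in>PiSet H K \<delta> \<tau> c0 \<mu> pi0 S A C k w.
            V1 H q \<mu> (rbar H K \<delta> \<tau> c0 S A R k w) (Phat S A k w)
              \<le> V1 H (pol k w) \<mu> (rbar H K \<delta> \<tau> c0 S A R k w) (Phat S A k w))"
    and action: "\<forall>k\<in>{1..K}. \<forall>h\<in>{1..H}. \<forall>a. AE w in M.
        real_cond_exp M (Galg M H S A R C k h 0) (indicator {w\<in>space M. A k h w = a}) w
          = pol k w h (S k h w) a"
    and reward_noise: "\<forall>k\<in>{1..K}. \<forall>h\<in>{1..H}.
        integrable M (\<lambda>w. R k h w - r h (S k h w) (A k h w)) \<and>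
        (AE w in M. real_cond_exp M (Galg M H S A R C k h 1) (\<lambda>w. R k h w - r h (S k h w) (A k h w)) w = 0) \<and>
        (\<forall>l::real. integrable M (\<lambda>w. exp (l * (R k h w - r h (S k h w) (A k h w)))) \<and>
           (AE w in M. real_cond_exp M (Galg M H S A R C k h 1)
               (\<lambda>w. exp (l * (R k h w - r h (S k h w) (A k h w)))) w \<le> exp (l^2 / 4)))"
    and cost_noise: "\<forall>k\<in>{1..K}. \<forall>h\<in>{1..H}.
        integrable M (\<lambda>w. C k h w - c h (S k h w) (A k h w)) \<and>
        (AE w in M. real_cond_exp M (Galg M H S A R C k h 2) (\<lambda>w. C k h w - c h (S k h w) (A k h w)) w = 0) \<and>
        (\<forall>l::real. integrable M (\<lambda>w. exp (l * (C k h w - c h (S k h w) (A k h w)))) \<and>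
           (AE w in M. real_cond_exp M (Galg M H S A R C k h 2)
               (\<lambda>w. exp (l * (C k h w - c h (S k h w) (A k h w)))) w \<le> exp (l^2 / 4)))"
    and transition: "\<forall>k\<in>{1..K}. \<forall>h\<in>{1..H}. \<forall>s'. AE w in M.
        real_cond_exp M (Galg M H S A R C k h 3) (indicator {w\<in>space M. S k (Suc h) w = s'}) w
          = P h (S k h w) (A k h w) s'"
  shows "\<exists>E\<in>sets M. measure M E \<ge> 1 - \<delta> \<and>
           (\<forall>w\<in>E. \<forall>k\<in>{1..K}. \<forall>q\<in>PiSet H K \<delta> \<tau> c0 \<mu> pi0 S A C k w. V1 H q \<mu> c P \<le> \<tau>)"
proof -
  interpret prob_space M by (rule M)
  show ?thesis
  proof (cases "K = 0")
    case True
    have "measure M (space M) = 1" by (rule prob_space)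
    then show ?thesis using True delta by (intro bexI[of _ "space M"]) auto
  next
    case False
    then have K1: "1 \<le> K" by simp
    define Sc where "Sc = real CARD('s)"
    define Ac where "Ac = real CARD('a)"
    define x where "x = 16 * Sc^2 * Ac * real H * real K / \<delta>"
    define Z where "Z = Zconf TYPE('s) TYPE('a) H K \<delta>"
    have Zx: "Z = ln x" unfolding Z_def Zconf_def x_def Sc_def Ac_def by simp
    have Sc1: "1 \<le> Sc" unfolding Sc_def by simp
    have Ac1: "1 \<le> Ac" unfolding Ac_def by simp
    have H1: "1 \<le> real H" using H by simp
    have K1': "1 \<le> real K" using K1 by simp
    have prod1: "1 \<le> Sc^2 * Ac * real H * real K"
    proof -
      have "1 \<le> Sc^2" using Sc1 by simp
      then have "1 * 1 * 1 * 1 \<le> Sc^2 * Ac * real H * real K"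
        using Ac1 H1 K1' by (intro mult_mono) auto
      then show ?thesis by simp
    qed
    have x16: "16 \<le> x"
    proof -
      have "16 \<le> 16 * Sc^2 * Ac * real H * real K" using prod1 by simp
      also have "\<dots> \<le> 16 * Sc^2 * Ac * real H * real K / \<delta>"
      proof -
        define y where "y = 16 * Sc^2 * Ac * real H * real K"
        have "y = 16 * (Sc^2 * Ac * real H * real K)" unfolding y_def by (simp add: algebra_simps)
        then have "0 \<le> y" using prod1 by linarith
        then have "y * \<delta> \<le> y * 1" using delta by (intro mult_left_mono) auto
        then have "y \<le> y / \<delta>" using delta by (simp add: le_divide_eq)
        then show ?thesis unfolding y_def .
      qed
      finally show ?thesis unfolding x_def .
    qed
    have Z1: "1 \<le> Z"
    proof -
      have "exp 1 \<le> x" using e_less_272 x16 by simp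
      then have "exp 1 \<le> exp (ln x)" using x16 by simp
      then show ?thesis unfolding Zx by simp
    qed
    have Z0: "0 \<le> Z" using Z1 by simp
    have expZ: "exp (- Z) = \<delta> / (16 * Sc^2 * Ac * real H * real K)"
    proof -
      have "exp (- Z) = 1 / x" unfolding Zx using x16 by (simp add: exp_minus inverse_eq_divide)
      then show ?thesis unfolding x_def by simp
    qed
    define Iv where "Iv h s a n j w \<longleftrightarrow> S j h w = s \<and> A j h w = a \<and> Ncnt S A j h s a w < n"
      for h s a n j w
    define Xc where "Xc h j w = c h (S j h w) (A j h w) - C j h w" for h j w
    define Xt where "Xt h s' j w = P h (S j h w) (A j h w) s' - indicator {w\<in>space M. S j (Suc h) w = s'} w"
      for h s' j w
    define Bc where "Bc = (\<lambda>(h, s, a, n). {w\<in>space M. sqrt (Z * real n) \<le> (\<Sum>j\<in>{1..K}. if Iv h s a n j w then Xc h j w else 0)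
            \<and> (\<Sum>j\<in>{1..K}. if Iv h s a n j w then 1 else 0) \<le> real n})"
    define Bt where "Bt = (\<lambda>(h, s, a, s', n). {w\<in>space M. sqrt (Z * real n) \<le> (\<Sum>j\<in>{1..K}. if Iv h s a n j w then Xt h s' j w else 0)
            \<and> (\<Sum>j\<in>{1..K}. if Iv h s a n j w then 1 else 0) \<le> real n})"
    define Ic where "Ic = {1..H} \<times> (UNIV::'s set) \<times> (UNIV::'a set) \<times> {1..K}"
    define It where "It = {1..H} \<times> (UNIV::'s set) \<times> (UNIV::'a set) \<times> (UNIV::'s set) \<times> {1..K}"
    define U1 where "U1 = (\<Union>i\<in>Ic. Bc i)"
    define U2 where "U2 = (\<Union>i\<in>It. Bt i)"
    define E where "E = space M - (U1 \<union> U2)"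

    note GF = Galg_facts[OF meas_S meas_A meas_R meas_C]
    have SAG: "S j h \<in> measurable (Galg M H S A R C k h st) (count_space UNIV) \<and>
               A j h \<in> measurable (Galg M H S A R C k h st) (count_space UNIV)"
      if "k \<in> {1..K}" "h \<in> {1..H}" "1 \<le> st" "j \<in> {1..k}" for k h st j
    proof (cases "j < k")
      case True
      then have "j \<in> {1..<k}" using that by auto
      then show ?thesis using GF(2,4)[OF that(1-3)] by blast
    next
      case False
      then have "j = k" using that by auto
      then show ?thesis using GF(6,7)[OF that(1-3)] by blast
    qed
    have IvG: "Measurable.pred (Galg M H S A R C k h st) (Iv h s a n j)"
      if "k \<in> {1..K}" "h \<in> {1..H}" "1 \<le> st" "j \<in> {1..k}" for k h st j s a n
    proof -
      have Ns: "(\<lambda>w. real (Ncnt S A j h s a w)) \<in> borel_measurable (Galg M H S A R C k h st)"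
        unfolding Ncnt_sum
      proof (intro borel_measurable_sum)
        fix i assume "i \<in> {1..<j}"
        then have "i \<in> {1..k}" using that by auto
        then have [measurable]: "S i h \<in> measurable (Galg M H S A R C k h st) (count_space UNIV)"
            "A i h \<in> measurable (Galg M H S A R C k h st) (count_space UNIV)" using SAG that by blast+
        show "(\<lambda>w. if S i h w = s \<and> A i h w = a then 1 else 0::real) \<in> borel_measurable (Galg M H S A R C k h st)"
          by measurable
      qed
      have [measurable]: "S j h \<in> measurable (Galg M H S A R C k h st) (count_space UNIV)"
            "A j h \<in> measurable (Galg M H S A R C k h st) (count_space UNIV)" using SAG that by blast+
      have eq: "Iv h s a n j = (\<lambda>w. S j h w = s \<and> A j h w = a \<and> real (Ncnt S A j h s a w) < real n)"
        unfolding Iv_def by auto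
      show ?thesis unfolding eq using Ns by measurable
    qed
    have Bc_bound: "Bc i \<in> sets M \<and> measure M (Bc i) \<le> exp (- Z)" if i_in: "i \<in> Ic" for i
    proof -
      obtain h s a n where i: "i = (h, s, a, n)" and h: "h \<in> {1..H}" and n: "n \<in> {1..K}"
        using i_in unfolding Ic_def by auto
      define l where "l = 2 * sqrt (Z / real n)"
      define G where "G k = Galg M H S A R C k h 2" for k
      have npos: "0 < real n" using n by simp
      have l0: "0 < l" unfolding l_def using Z1 npos by simp
      have subalg: "\<forall>k\<in>{1..K}. subalgebra M (G k)" unfolding G_def using GF(1) h by simp
      have IG: "\<forall>k\<in>{1..K}. \<forall>j\<in>{1..k}. Measurable.pred (G k) (Iv h s a n j)"
        unfolding G_def using IvG h by simp
      have XG: "\<forall>k\<in>{1..K}. \<forall>j\<in>{1..<k}. Xc h j \<in> borel_measurable (G k)"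
      proof (intro ballI)
        fix k j assume k: "k \<in> {1..K}" and j: "j \<in> {1..<k}"
        have "S j h \<in> measurable (G k) (count_space UNIV)" "A j h \<in> measurable (G k) (count_space UNIV)"
          using SAG[OF k h, of 2 j] j unfolding G_def by auto
        from meas_comp2[OF this, of "c h"]
        have [measurable]: "(\<lambda>w. c h (S j h w) (A j h w)) \<in> borel_measurable (G k)" .
        have [measurable]: "C j h \<in> borel_measurable (G k)" using GF(5)[OF k h _ j] unfolding G_def by simp
        show "Xc h j \<in> borel_measurable (G k)" unfolding Xc_def by measurable
      qed
      have XM: "\<forall>k\<in>{1..K}. Xc h k \<in> borel_measurable M"
      proof
        fix k assume k: "k \<in> {1..K}"
        have "S k h \<in> measurable M (count_space UNIV)" "A k h \<in> measurable M (count_space UNIV)"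
          using meas_S meas_A k h by auto
        from meas_comp2[OF this, of "c h"]
        have [measurable]: "(\<lambda>w. c h (S k h w) (A k h w)) \<in> borel_measurable M" .
        have [measurable]: "C k h \<in> borel_measurable M" using meas_C k h by simp
        show "Xc h k \<in> borel_measurable M" unfolding Xc_def by measurable
      qed
      have sub: "\<forall>k\<in>{1..K}. \<forall>f. f \<in> borel_measurable (G k) \<longrightarrow> (\<forall>w. 0 \<le> f w) \<longrightarrow>
        (\<integral>\<^sup>+w. ennreal (f w * exp (l * Xc h k w)) \<partial>M) \<le> (\<integral>\<^sup>+w. ennreal (f w * exp (l^2/4)) \<partial>M)"
      proof (intro ballI allI impI)
        fix k and f :: "'w \<Rightarrow> real" assume k: "k \<in> {1..K}" and f: "f \<in> borel_measurable (G k)" "\<forall>w. 0 \<le> f w"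
        have cn: "integrable M (\<lambda>w. exp ((-l) * (C k h w - c h (S k h w) (A k h w))))"
           "AE w in M. real_cond_exp M (Galg M H S A R C k h 2)
               (\<lambda>w. exp ((-l) * (C k h w - c h (S k h w) (A k h w)))) w \<le> exp ((-l)^2 / 4)"
          using cost_noise k h by blast+
        have feq: "(\<lambda>w. exp ((-l) * (C k h w - c h (S k h w) (A k h w)))) = (\<lambda>w. exp (l * Xc h k w))"
          unfolding Xc_def by (auto simp: algebra_simps)
        show "(\<integral>\<^sup>+w. ennreal (f w * exp (l * Xc h k w)) \<partial>M) \<le> (\<integral>\<^sup>+w. ennreal (f w * exp (l^2/4)) \<partial>M)"
          using cond_exp_nn_bound[OF M, of "G k" f "\<lambda>w. exp (l * Xc h k w)" "exp (l^2/4)"]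
            subalg k f cn unfolding feq G_def by simp
      qed
      note CC = conc[OF M subalg IG XG XM sub l0, of "sqrt (Z * real n)" n]
      have ex: "l * sqrt (Z * real n) - l^2 * real n / 4 = Z"
        unfolding l_def using exponent_id[OF Z0 npos] by simp
      show ?thesis using CC unfolding i Bc_def ex by simp
    qed
    have P01: "0 \<le> P h s a s' \<and> P h s a s' \<le> 1" if "h \<in> {1..H}" for h s a s'
    proof -
      have d: "is_dist (P h s a)" using P_dist that by blast
      then have "P h s a s' \<le> (\<Sum>x\<in>UNIV. P h s a x)" unfolding is_dist_def
        by (intro member_le_sum) auto
      then show ?thesis using d unfolding is_dist_def by auto
    qed
    have Bt_bound: "Bt i \<in> sets M \<and> measure M (Bt i) \<le> exp (- Z)" if i_in: "i \<in> It" for i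
    proof -
      obtain h s a s' n where i: "i = (h, s, a, s', n)" and h: "h \<in> {1..H}" and n: "n \<in> {1..K}"
        using i_in unfolding It_def by auto
      define l where "l = 2 * sqrt (Z / real n)"
      define G where "G k = Galg M H S A R C k h 3" for k
      have npos: "0 < real n" using n by simp
      have l0: "0 < l" unfolding l_def using Z1 npos by simp
      have subalg: "\<forall>k\<in>{1..K}. subalgebra M (G k)" unfolding G_def using GF(1) h by simp
      have IG: "\<forall>k\<in>{1..K}. \<forall>j\<in>{1..k}. Measurable.pred (G k) (Iv h s a n j)"
        unfolding G_def using IvG h by simp
      have XG: "\<forall>k\<in>{1..K}. \<forall>j\<in>{1..<k}. Xt h s' j \<in> borel_measurable (G k)"
      proof (intro ballI)
        fix k j assume k: "k \<in> {1..K}" and j: "j \<in> {1..<k}"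
        have "S j h \<in> measurable (G k) (count_space UNIV)" "A j h \<in> measurable (G k) (count_space UNIV)"
          using SAG[OF k h, of 3 j] j unfolding G_def by auto
        from meas_comp2[OF this, of "\<lambda>s a. P h s a s'"]
        have [measurable]: "(\<lambda>w. P h (S j h w) (A j h w) s') \<in> borel_measurable (G k)" .
        have [measurable]: "S j (Suc h) \<in> measurable (G k) (count_space UNIV)" using GF(3)[OF k h _ j] unfolding G_def by simp
        have sp: "space (G k) = space M" using subalg k unfolding subalgebra_def by auto
        have "(\<lambda>w. indicator {w\<in>space (G k). S j (Suc h) w = s'} w :: real) \<in> borel_measurable (G k)" by measurable
        then have [measurable]: "(\<lambda>w. indicator {w\<in>space M. S j (Suc h) w = s'} w :: real) \<in> borel_measurable (G k)"
          unfolding sp .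
        show "Xt h s' j \<in> borel_measurable (G k)" unfolding Xt_def by measurable
      qed
      have XM: "\<forall>k\<in>{1..K}. Xt h s' k \<in> borel_measurable M"
      proof
        fix k assume k: "k \<in> {1..K}"
        have "S k h \<in> measurable M (count_space UNIV)" "A k h \<in> measurable M (count_space UNIV)"
          using meas_S meas_A k h by auto
        from meas_comp2[OF this, of "\<lambda>s a. P h s a s'"]
        have [measurable]: "(\<lambda>w. P h (S k h w) (A k h w) s') \<in> borel_measurable M" .
        have [measurable]: "S k (Suc h) \<in> measurable M (count_space UNIV)" using meas_S k h by auto
        show "Xt h s' k \<in> borel_measurable M" unfolding Xt_def by measurable
      qed
      have sub: "\<forall>k\<in>{1..K}. \<forall>f. f \<in> borel_measurable (G k) \<longrightarrow> (\<forall>w. 0 \<le> f w) \<longrightarrow>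
        (\<integral>\<^sup>+w. ennreal (f w * exp (l * Xt h s' k w)) \<partial>M) \<le> (\<integral>\<^sup>+w. ennreal (f w * exp (l^2/4)) \<partial>M)"
      proof (intro ballI allI impI)
        fix k and f :: "'w \<Rightarrow> real" assume k: "k \<in> {1..K}" and f: "f \<in> borel_measurable (G k)" "\<forall>w. 0 \<le> f w"
        have "S k h \<in> measurable (G k) (count_space UNIV)" "A k h \<in> measurable (G k) (count_space UNIV)"
          using SAG[OF k h, of 3 k] k unfolding G_def by auto
        from meas_comp2[OF this, of "\<lambda>s a. P h s a s'"]
        have pG: "(\<lambda>w. P h (S k h w) (A k h w) s') \<in> borel_measurable (G k)" .
        have [measurable]: "S k (Suc h) \<in> measurable M (count_space UNIV)" using meas_S k h by auto
        have Xs: "{w\<in>space M. S k (Suc h) w = s'} \<in> sets M" by measurable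
        have ce: "AE w in M. real_cond_exp M (G k) (indicator {w\<in>space M. S k (Suc h) w = s'}) w
          = P h (S k h w) (A k h w) s'" using transition k h unfolding G_def by blast
        have "(\<integral>\<^sup>+w. ennreal (f w * exp (l * (P h (S k h w) (A k h w) s' - indicator {w\<in>space M. S k (Suc h) w = s'} w))) \<partial>M)
           \<le> (\<integral>\<^sup>+w. ennreal (f w * exp (l^2/4)) \<partial>M)"
          by (rule bern_sub[OF M _ pG _ Xs ce _ f(1)]) (use subalg k P01 h l0 f(2) in auto)
        then show "(\<integral>\<^sup>+w. ennreal (f w * exp (l * Xt h s' k w)) \<partial>M) \<le> (\<integral>\<^sup>+w. ennreal (f w * exp (l^2/4)) \<partial>M)"
          unfolding Xt_def .
      qed
      note CC = conc[OF M subalg IG XG XM sub l0, of "sqrt (Z * real n)" n]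
      have ex: "l * sqrt (Z * real n) - l^2 * real n / 4 = Z"
        unfolding l_def using exponent_id[OF Z0 npos] by simp
      show ?thesis using CC unfolding i Bt_def ex by simp
    qed
    have finIc: "finite Ic" unfolding Ic_def by simp
    have finIt: "finite It" unfolding It_def by simp
    have U1s: "U1 \<in> sets M" unfolding U1_def using Bc_bound finIc by (intro sets.finite_UN) auto
    have U2s: "U2 \<in> sets M" unfolding U2_def using Bt_bound finIt by (intro sets.finite_UN) auto
    have mU1: "measure M U1 \<le> real (card Ic) * exp (- Z)"
    proof -
      have "measure M U1 \<le> (\<Sum>i\<in>Ic. measure M (Bc i))" unfolding U1_def
        by (rule finite_measure_subadditive_finite) (use Bc_bound finIc in auto)
      also have "\<dots> \<le> real (card Ic) * exp (- Z)" by (rule sum_bounded_above) (use Bc_bound in auto)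
      finally show ?thesis .
    qed
    have mU2: "measure M U2 \<le> real (card It) * exp (- Z)"
    proof -
      have "measure M U2 \<le> (\<Sum>i\<in>It. measure M (Bt i))" unfolding U2_def
        by (rule finite_measure_subadditive_finite) (use Bt_bound finIt in auto)
      also have "\<dots> \<le> real (card It) * exp (- Z)" by (rule sum_bounded_above) (use Bt_bound in auto)
      finally show ?thesis .
    qed
    have cIc: "real (card Ic) = real H * Sc * Ac * real K"
      unfolding Ic_def Sc_def Ac_def by (simp add: card_cartesian_product)
    have cIt: "real (card It) = real H * Sc * Ac * Sc * real K"
      unfolding It_def Sc_def Ac_def by (simp add: card_cartesian_product)
    have arith: "real (card Ic) * exp (- Z) + real (card It) * exp (- Z) \<le> \<delta>"
    proof -
      have nz: "Sc \<noteq> 0" "Ac \<noteq> 0" "real H \<noteq> 0" "real K \<noteq> 0" using Sc1 Ac1 H1 K1' by auto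
      have a1: "real (card Ic) * exp (- Z) = \<delta> / (16 * Sc)"
        unfolding cIc expZ using nz by (simp add: field_simps power2_eq_square)
      have a2: "real (card It) * exp (- Z) = \<delta> / 16"
        unfolding cIt expZ using nz by (simp add: field_simps power2_eq_square)
      have "\<delta> / (16 * Sc) \<le> \<delta> / 16" using Sc1 delta by (intro divide_left_mono) auto
      then show ?thesis unfolding a1 a2 using delta by linarith
    qed
    have Es: "E \<in> sets M" unfolding E_def using U1s U2s by auto
    have mE: "1 - \<delta> \<le> measure M E"
    proof -
      have "measure M E = 1 - measure M (U1 \<union> U2)" unfolding E_def by (rule prob_compl) (use U1s U2s in auto)
      moreover have "measure M (U1 \<union> U2) \<le> measure M U1 + measure M U2"
        by (rule measure_subadditive) (use U1s U2s in \<open>auto simp: emeasure_eq_measure\<close>)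
      ultimately show ?thesis using mU1 mU2 arith by linarith
    qed
    have good: "c h s a - emp_mean S A C k w h s a \<le> beta H K \<delta> S A k w h s a \<and>
                (\<forall>s'. P h s a s' - Phat S A k w h s a s' \<le> beta H K \<delta> S A k w h s a)"
      if wE: "w \<in> E" and k: "k \<in> {1..K}" and h: "h \<in> {1..H}" for w k h s a
    proof -
      have wM: "w \<in> space M" using wE unfolding E_def by auto
      have wU1: "w \<notin> U1" and wU2: "w \<notin> U2" using wE unfolding E_def by auto
      define n where "n = Ncnt S A k h s a w"
      define V where "V = {j\<in>{1..<k}. S j h w = s \<and> A j h w = a}"
      have finV: "finite V" unfolding V_def by simp
      have cardV: "card V = n" unfolding V_def n_def Ncnt_def by simp
      have bet: "beta H K \<delta> S A k w h s a = sqrt (Z / real (max n 1))" unfolding beta_def Z_def n_def by simp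
      have emp: "emp_mean S A C k w h s a = (\<Sum>j\<in>V. C j h w) / real (max n 1)"
        unfolding emp_mean_def V_def n_def by simp
      have ph: "Phat S A k w h s a s' = real (card {j\<in>V. S j (Suc h) w = s'}) / real (max n 1)" for s'
      proof -
        have "{j\<in>{1..<k}. S j h w = s \<and> A j h w = a \<and> S j (Suc h) w = s'} = {j\<in>V. S j (Suc h) w = s'}"
          unfolding V_def by auto
        then show ?thesis unfolding Phat_def n_def by simp
      qed
      have c1: "c h s a \<le> 1" using c_range h by blast
      show ?thesis
      proof (cases "n = 0")
        case True
        then have V0: "V = {}" using cardV finV by simp
        have b1: "1 \<le> beta H K \<delta> S A k w h s a" unfolding bet using True Z1 by simp
        have e0: "emp_mean S A C k w h s a = 0" unfolding emp V0 by simp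
        have p0: "Phat S A k w h s a s' = 0" for s' unfolding ph V0 by simp
        show ?thesis
        proof (intro conjI allI)
          show "c h s a - emp_mean S A C k w h s a \<le> beta H K \<delta> S A k w h s a" using e0 b1 c1 by simp
          fix s'
          show "P h s a s' - Phat S A k w h s a s' \<le> beta H K \<delta> S A k w h s a"
            using p0[of s'] b1 P01[OF h, of s a s'] by simp
        qed
      next
        case False
        then have n1: "1 \<le> n" by simp
        have nK: "n \<le> K" using Ncnt_le[of S A k h s a w] k unfolding n_def by auto
        have npos: "0 < real n" using n1 by simp
        have maxn: "max n 1 = n" using n1 by simp
        have ve: "{j\<in>{1..K}. Iv h s a n j w} = V"
          unfolding Iv_def V_def using visits_eq[of k K S A h s a w n] k n_def by auto
        have cnt: "(\<Sum>j\<in>{1..K}. if Iv h s a n j w then 1 else 0) = real n"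
        proof -
          have "(\<Sum>j\<in>{1..K}. if Iv h s a n j w then 1 else (0::real)) = (\<Sum>j\<in>{j\<in>{1..K}. Iv h s a n j w}. 1)"
            by (rule sum.inter_filter[symmetric]) simp
          also have "\<dots> = real n" unfolding ve using cardV by simp
          finally show ?thesis .
        qed
        have sumX: "(\<Sum>j\<in>{1..K}. if Iv h s a n j w then X j else 0) = (\<Sum>j\<in>V. X j)" for X :: "nat \<Rightarrow> real"
          using sum.inter_filter[of "{1..K}" X "\<lambda>j. Iv h s a n j w", symmetric] ve by simp
        have svis: "S j h w = s" "A j h w = a" if "j \<in> V" for j using that unfolding V_def by auto
        have sq: "sqrt (Z * real n) / real n = beta H K \<delta> S A k w h s a"
          unfolding bet maxn using sqrt_div_id[OF Z0 npos] by simp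
        have cost: "c h s a - emp_mean S A C k w h s a \<le> beta H K \<delta> S A k w h s a"
        proof -
          have "(h, s, a, n) \<in> Ic" unfolding Ic_def using h n1 nK by auto
          then have "w \<notin> Bc (h, s, a, n)" using wU1 unfolding U1_def by auto
          then have "\<not> (sqrt (Z * real n) \<le> (\<Sum>j\<in>{1..K}. if Iv h s a n j w then Xc h j w else 0)
            \<and> (\<Sum>j\<in>{1..K}. if Iv h s a n j w then 1 else 0) \<le> real n)" using wM unfolding Bc_def by simp
          moreover have "(\<Sum>j\<in>{1..K}. if Iv h s a n j w then Xc h j w else 0) = (\<Sum>j\<in>V. Xc h j w)" by (rule sumX)
          ultimately have lt: "\<not> sqrt (Z * real n) \<le> (\<Sum>j\<in>V. Xc h j w)" using cnt by simp
          have "(\<Sum>j\<in>V. Xc h j w) = (\<Sum>j\<in>V. c h s a - C j h w)" by (rule sum.cong) (auto simp: Xc_def svis)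
          also have "\<dots> = real n * c h s a - (\<Sum>j\<in>V. C j h w)" by (simp add: sum_subtractf cardV)
          finally have "real n * c h s a - (\<Sum>j\<in>V. C j h w) < sqrt (Z * real n)" using lt by simp
          then have "(real n * c h s a - (\<Sum>j\<in>V. C j h w)) / real n < sqrt (Z * real n) / real n"
            using npos by (simp add: divide_strict_right_mono)
          moreover have "(real n * c h s a - (\<Sum>j\<in>V. C j h w)) / real n = c h s a - emp_mean S A C k w h s a"
            unfolding emp maxn using npos by (simp add: field_simps)
          ultimately show ?thesis unfolding sq by simp
        qed
        have trans: "P h s a s' - Phat S A k w h s a s' \<le> beta H K \<delta> S A k w h s a" for s'
        proof -
          have "(h, s, a, s', n) \<in> It" unfolding It_def using h n1 nK by auto
          then have "w \<notin> Bt (h, s, a, s', n)" using wU2 unfolding U2_def by auto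
          then have "\<not> (sqrt (Z * real n) \<le> (\<Sum>j\<in>{1..K}. if Iv h s a n j w then Xt h s' j w else 0)
            \<and> (\<Sum>j\<in>{1..K}. if Iv h s a n j w then 1 else 0) \<le> real n)" using wM unfolding Bt_def by simp
          moreover have "(\<Sum>j\<in>{1..K}. if Iv h s a n j w then Xt h s' j w else 0) = (\<Sum>j\<in>V. Xt h s' j w)" by (rule sumX)
          ultimately have lt: "\<not> sqrt (Z * real n) \<le> (\<Sum>j\<in>V. Xt h s' j w)" using cnt by simp
          have "(\<Sum>j\<in>V. Xt h s' j w) = (\<Sum>j\<in>V. P h s a s' - (if S j (Suc h) w = s' then 1 else 0))"
            by (rule sum.cong) (auto simp: Xt_def svis wM)
          also have "\<dots> = real n * P h s a s' - (\<Sum>j\<in>V. if S j (Suc h) w = s' then 1 else 0)"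
            by (simp add: sum_subtractf cardV)
          also have "(\<Sum>j\<in>V. if S j (Suc h) w = s' then 1 else 0) = real (card {j\<in>V. S j (Suc h) w = s'})"
            using finV by (simp add: sum.inter_filter[symmetric])
          finally have "real n * P h s a s' - real (card {j\<in>V. S j (Suc h) w = s'}) < sqrt (Z * real n)"
            using lt by simp
          then have "(real n * P h s a s' - real (card {j\<in>V. S j (Suc h) w = s'})) / real n < sqrt (Z * real n) / real n"
            using npos by (simp add: divide_strict_right_mono)
          moreover have "(real n * P h s a s' - real (card {j\<in>V. S j (Suc h) w = s'})) / real n = P h s a s' - Phat S A k w h s a s'"
            unfolding ph maxn using npos by (simp add: field_simps)
          ultimately show ?thesis unfolding sq by simp
        qed
        show ?thesis using cost trans by blast
      qed
    qed
    show ?thesis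
    proof (rule bexI[OF _ Es], intro conjI ballI)
      show "1 - \<delta> \<le> measure M E" by (rule mE)
    next
      fix w k q assume wE: "w \<in> E" and k: "k \<in> {1..K}" and q: "q \<in> PiSet H K \<delta> \<tau> c0 \<mu> pi0 S A C k w"
      show "V1 H q \<mu> c P \<le> \<tau>"
      proof (cases "(\<tau> + c0) / 2 \<le> V1 H pi0 \<mu> (cpess H K \<delta> S A C k w) (Phat S A k w)")
        case True
        then have "q = pi0" using q unfolding PiSet_def by simp
        then show ?thesis using pi0 by simp
      next
        case False
        then have qp: "is_policy H q" and qv: "V1 H q \<mu> (cpess H K \<delta> S A C k w) (Phat S A k w) \<le> \<tau>"
          using q unfolding PiSet_def by auto
        have "V1 H q \<mu> c P \<le> V1 H q \<mu> (cpess H K \<delta> S A C k w) (Phat S A k w)"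
        proof (rule V1_sim[OF qp P_dist c_range _ _ _ _ mu_dist, where b = "beta H K \<delta> S A k w"])
          show "\<forall>h s a s'. 0 \<le> Phat S A k w h s a s'" unfolding Phat_def by simp
          show "\<forall>h s a. 0 \<le> beta H K \<delta> S A k w h s a" unfolding beta_def using Z0 unfolding Z_def by simp
          show "\<forall>h\<in>{1..H}. \<forall>s a s'. P h s a s' - Phat S A k w h s a s' \<le> beta H K \<delta> S A k w h s a"
            using good[OF wE k] by blast
          show "\<forall>h\<in>{1..H}. \<forall>s a. c h s a + real CARD('s) * real H * beta H K \<delta> S A k w h s a
              \<le> cpess H K \<delta> S A C k w h s a"
          proof (intro ballI allI)
            fix h s a assume h: "h \<in> {1..H}"
            have "c h s a - emp_mean S A C k w h s a \<le> beta H K \<delta> S A k w h s a" using good[OF wE k h] by blast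
            then show "c h s a + real CARD('s) * real H * beta H K \<delta> S A k w h s a \<le> cpess H K \<delta> S A C k w h s a"
              unfolding cpess_def by (simp add: algebra_simps)
          qed
        qed
        then show ?thesis using qv by simp
      qed
    qed
  qed
qed

end
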